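(* Let $G, G'$ be two distinct spanning trees of $K_{n,d}$ and let $e\in G$, $e'\in G'$ be edges such that $G\setminus e = G'\setminus e' = H$. Let the two connected components of $H$ have vertex sets $I^{(1)}\sqcup \bar J^{(1)}$ and $I^{(2)}\sqcup \bar J^{(2)}$ (with $I^{(k)}\subseteq[n]$, $\bar J^{(k)}\subseteq[\bar d]$). Then $G$ and $G'$ are compatible if and only if either ($e$ joins a vertex of $I^{(1)}$ to a vertex of $\bar J^{(2)}$ and $e'$ joins a vertex of $I^{(2)}$ to a vertex of $\bar J^{(1)}$) or ($e$ joins $I^{(2)}$ to $\bar J^{(1)}$ and $e'$ joins $I^{(1)}$ to $\bar J^{(2)}$). In particular, if $G$ and $G'$ are compatible then $e$ and $e'$ share no vertex.
   Context: Fix positive integers $n,d$. $K_{n,d}$ denotes the complete bipartite graph with left vertex set $[n]=\{1,\dots,n\}$ and right vertex set $[\bar d]=\{\bar 1,\dots,\bar d\}$; all graphs considered are subgraphs of $K_{n,d}$ (identified with their edge sets). Two acyclic subgraphs $G,G'$ of $K_{n,d}$ are called compatible if whenever both $G$ and $G'$ contain a perfect matching between the same pair of vertex sets $I\subseteq[n]$ and $\bar J\subseteq[\bar d]$, these two matchings are equal. *)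

theory Defs
  imports Main
begin

text \<open>Edges of K_{n,d}: pairs (i,j) with i in {1..n} (left vertex i) and j in {1..d}
  (right vertex bar j). A graph is a set of such edges. Vertices are Inl i (left) and Inr j (right).\<close>

type_synonym edge = "nat \<times> nat"
type_synonym vert = "nat + nat"

definition Kedges :: "nat \<Rightarrow> nat \<Rightarrow> edge set" where
  "Kedges n d = {1..n} \<times> {1..d}"

definition Kverts :: "nat \<Rightarrow> nat \<Rightarrow> vert set" where
  "Kverts n d = Inl ` {1..n} \<union> Inr ` {1..d}"

definition vset :: "nat set \<Rightarrow> nat set \<Rightarrow> vert set" where
  "vset I J = Inl ` I \<union> Inr ` J"

definition adj :: "edge set \<Rightarrow> vert \<Rightarrow> vert \<Rightarrow> bool" where
  "adj G u v \<longleftrightarrow> (\<exists>i j. (i, j) \<in> G \<and> ((u = Inl i \<and> v = Inr j) \<or> (u = Inr j \<and> v = Inl i)))"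

definition is_cycle :: "edge set \<Rightarrow> vert list \<Rightarrow> bool" where
  "is_cycle G vs \<longleftrightarrow> length vs \<ge> 3 \<and> distinct vs
     \<and> (\<forall>k. Suc k < length vs \<longrightarrow> adj G (vs ! k) (vs ! Suc k))
     \<and> adj G (last vs) (hd vs)"

definition acyclic_graph :: "edge set \<Rightarrow> bool" where
  "acyclic_graph G \<longleftrightarrow> \<not> (\<exists>vs. is_cycle G vs)"

definition connected_in :: "edge set \<Rightarrow> vert \<Rightarrow> vert \<Rightarrow> bool" where
  "connected_in G u v \<longleftrightarrow> (u, v) \<in> {(x, y). adj G x y}\<^sup>*"

definition spanning_tree :: "nat \<Rightarrow> nat \<Rightarrow> edge set \<Rightarrow> bool" where
  "spanning_tree n d G \<longleftrightarrow> G \<subseteq> Kedges n d \<and> acyclic_graph G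
     \<and> (\<forall>u\<in>Kverts n d. \<forall>v\<in>Kverts n d. connected_in G u v)"

definition components :: "nat \<Rightarrow> nat \<Rightarrow> edge set \<Rightarrow> vert set set" where
  "components n d H = (\<lambda>u. {v \<in> Kverts n d. connected_in H u v}) ` Kverts n d"

definition perfect_matching_in :: "edge set \<Rightarrow> nat set \<Rightarrow> nat set \<Rightarrow> edge set \<Rightarrow> bool" where
  "perfect_matching_in G I J M \<longleftrightarrow> M \<subseteq> G \<and> M \<subseteq> I \<times> J
     \<and> (\<forall>i\<in>I. \<exists>!j. (i, j) \<in> M) \<and> (\<forall>j\<in>J. \<exists>!i. (i, j) \<in> M)"

definition compatible :: "nat \<Rightarrow> nat \<Rightarrow> edge set \<Rightarrow> edge set \<Rightarrow> bool" where
  "compatible n d G G' \<longleftrightarrow> (\<forall>I J M M'. I \<subseteq> {1..n} \<longrightarrow> J \<subseteq> {1..d}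
     \<longrightarrow> perfect_matching_in G I J M \<longrightarrow> perfect_matching_in G' I J M' \<longrightarrow> M = M')"

end

theory Submission
  imports Defs
begin


lemma adj_sym: "adj G u v \<Longrightarrow> adj G v u"
  unfolding adj_def by blast

lemma conn_refl: "connected_in G u u"
  unfolding connected_in_def by simp

lemma conn_trans: "connected_in G u v \<Longrightarrow> connected_in G v w \<Longrightarrow> connected_in G u w"
  unfolding connected_in_def by (meson rtrancl_trans)

lemma conn_step: "adj G u v \<Longrightarrow> connected_in G u v"
  unfolding connected_in_def by auto

lemma conn_sym: "connected_in G u v \<Longrightarrow> connected_in G v u"
  unfolding connected_in_def
proof (induction rule: rtrancl_induct)
  case base
  then show ?case by simp
next
  case (step y z)
  then have "(z, y) \<in> {(x, y). adj G x y}\<^sup>*" using adj_sym by auto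
  then show ?case using step.IH by (meson rtrancl_trans)
qed

lemma conn_edge: "(a, b) \<in> G \<Longrightarrow> connected_in G (Inl a) (Inr b)"
  by (rule conn_step) (auto simp: adj_def)

lemma conn_mono_insert:
  assumes "connected_in (insert (i, j) H) u v" and "connected_in H (Inl i) (Inr j)"
  shows "connected_in H u v"
  using assms(1) unfolding connected_in_def
proof (induction rule: rtrancl_induct)
  case base
  then show ?case by simp
next
  case (step y z)
  have "connected_in H y z"
  proof -
    from step.hyps(2) have "adj (insert (i, j) H) y z" by simp
    then obtain a b where ab: "(a, b) \<in> insert (i, j) H"
      "(y = Inl a \<and> z = Inr b) \<or> (y = Inr b \<and> z = Inl a)" unfolding adj_def by blast
    show ?thesis
    proof (cases "(a, b) = (i, j)")
      case True
      then show ?thesis using ab(2) assms(2) conn_sym by auto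
    next
      case False
      then have "adj H y z" using ab unfolding adj_def by blast
      then show ?thesis by (rule conn_step)
    qed
  qed
  then show ?case using step.IH unfolding connected_in_def by (meson rtrancl_trans)
qed

lemma adj_mono: "adj H u v \<Longrightarrow> H \<subseteq> G \<Longrightarrow> adj G u v"
  unfolding adj_def by blast

lemma acyclic_mono: "acyclic_graph G \<Longrightarrow> H \<subseteq> G \<Longrightarrow> acyclic_graph H"
  unfolding acyclic_graph_def is_cycle_def using adj_mono by metis

definition matching :: "edge set \<Rightarrow> bool" where
  "matching M \<longleftrightarrow> (\<forall>a b c d. (a, b) \<in> M \<longrightarrow> (c, d) \<in> M \<longrightarrow> (a = c \<longleftrightarrow> b = d))"

lemma matching_insert:
  assumes m: "matching A" and a: "a \<notin> fst ` A" and b: "b \<notin> snd ` A"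
  shows "matching (insert (a, b) A)"
  unfolding matching_def
proof (intro allI impI)
  fix x y z w assume xy: "(x, y) \<in> insert (a, b) A" and zw: "(z, w) \<in> insert (a, b) A"
  have aA: "(a, v) \<notin> A" "(v, b) \<notin> A" for v using a b by (force, force)
  show "x = z \<longleftrightarrow> y = w"
  proof (cases "(x, y) = (a, b)")
    case True
    then show ?thesis using zw aA by auto
  next
    case False
    then have xyA: "(x, y) \<in> A" using xy by auto
    show ?thesis
    proof (cases "(z, w) = (a, b)")
      case True
      then show ?thesis using xyA aA by auto
    next
      case False
      then have "(z, w) \<in> A" using zw by auto
      then show ?thesis using xyA m unfolding matching_def by blast
    qed
  qed
qed
lemma matching_Un:
  assumes m: "matching A" "matching B" and d: "fst ` A \<inter> fst ` B = {}" "snd ` A \<inter> snd ` B = {}"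
  shows "matching (A \<union> B)"
  unfolding matching_def
proof (intro allI impI)
  fix x y z w assume xy: "(x, y) \<in> A \<union> B" and zw: "(z, w) \<in> A \<union> B"
  have c: "(p, q) \<in> A \<Longrightarrow> (r, t) \<in> B \<Longrightarrow> p \<noteq> r \<and> q \<noteq> t" for p q r t
    using d by (metis disjoint_iff fst_conv snd_conv image_eqI)
  show "x = z \<longleftrightarrow> y = w"
    using xy zw m c unfolding matching_def by (metis Un_iff)
qed

lemma matching_pm: "matching M \<Longrightarrow> M \<subseteq> G \<Longrightarrow> perfect_matching_in G (fst ` M) (snd ` M) M"
  unfolding perfect_matching_in_def
proof (intro conjI ballI)
  assume m: "matching M"
  show "M \<subseteq> fst ` M \<times> snd ` M" by force
  fix i assume "i \<in> fst ` M"
  then obtain j where "(i, j) \<in> M" by force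
  then show "\<exists>!j. (i, j) \<in> M" using m unfolding matching_def by blast
next
  fix j assume m: "matching M" and "j \<in> snd ` M"
  then obtain i where "(i, j) \<in> M" by force
  then show "\<exists>!i. (i, j) \<in> M" using m unfolding matching_def by blast
qed



fun walk :: "edge set \<Rightarrow> vert list \<Rightarrow> bool" where
  "walk H [] = True"
| "walk H [x] = True"
| "walk H (x # y # xs) = (adj H x y \<and> walk H (y # xs))"

lemma walk_overlap: "walk H (xs @ x # ys) \<longleftrightarrow> walk H (xs @ [x]) \<and> walk H (x # ys)"
  by (induction H xs rule: walk.induct) auto

lemma walk_tl: "walk H xs \<Longrightarrow> walk H (tl xs)"
  by (induction H xs rule: walk.induct) auto

lemma walk_butlast: "walk H xs \<Longrightarrow> walk H (butlast xs)"
  by (induction H xs rule: walk.induct) (auto split: if_splits)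

lemma conn_walk: "connected_in H u v \<Longrightarrow> \<exists>xs. walk H xs \<and> xs \<noteq> [] \<and> hd xs = u \<and> last xs = v"
  unfolding connected_in_def
proof (induction rule: converse_rtrancl_induct)
  case base
  then show ?case by (intro exI[of _ "[v]"]) auto
next
  case (step y z)
  then obtain xs where "walk H xs" "xs \<noteq> []" "hd xs = z" "last xs = v" by blast
  then show ?case using step.hyps(1)
    by (intro exI[of _ "y # xs"]) (cases xs, auto)
qed

lemma walk_distinct:
  "walk H xs \<Longrightarrow> xs \<noteq> [] \<Longrightarrow> \<exists>ys. walk H ys \<and> ys \<noteq> [] \<and> hd ys = hd xs \<and> last ys = last xs
     \<and> distinct ys \<and> set ys \<subseteq> set xs"
proof (induction "length xs" arbitrary: xs rule: less_induct)
  case less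
  show ?case
  proof (cases "distinct xs")
    case True
    then show ?thesis using less.prems by blast
  next
    case False
    then obtain as x bs cs where xs: "xs = as @ [x] @ bs @ [x] @ cs"
      using not_distinct_decomp by blast
    let ?ys = "as @ x # cs"
    have w1: "walk H (as @ [x])" "walk H (x # bs @ x # cs)"
      using less.prems(1) walk_overlap[of H as x "bs @ x # cs"] xs by auto
    have "walk H (x # cs)"
      using w1(2) walk_overlap[of H "x # bs" x cs] by auto
    then have "walk H ?ys" using w1(1) walk_overlap by blast
    moreover have "length ?ys < length xs" using xs by simp
    moreover have "?ys \<noteq> []" by simp
    ultimately obtain zs where "walk H zs \<and> zs \<noteq> [] \<and> hd zs = hd ?ys \<and> last zs = last ?ys
     \<and> distinct zs \<and> set zs \<subseteq> set ?ys" using less.hyps by blast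
    moreover have "hd ?ys = hd xs" "last ?ys = last xs" "set ?ys \<subseteq> set xs" using xs
      by (cases as; auto)+
    ultimately show ?thesis by (intro exI[of _ zs]) auto
  qed
qed

lemma walk_conn: "walk H xs \<Longrightarrow> x \<in> set xs \<Longrightarrow> connected_in H (hd xs) x"
proof (induction H xs rule: walk.induct)
  case (3 H a b xs)
  then show ?case using conn_refl conn_trans conn_step by fastforce
qed (auto simp: conn_refl)

lemma walk_parity: "walk H xs \<Longrightarrow> xs \<noteq> [] \<Longrightarrow> (isl (hd xs) = isl (last xs)) \<longleftrightarrow> odd (length xs)"
proof (induction H xs rule: walk.induct)
  case (3 H x y xs)
  have "adj H x y" using 3(2) by simp
  then have "isl x \<noteq> isl y" unfolding adj_def by auto
  then show ?case using 3 by auto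
qed auto

definition ed :: "vert \<Rightarrow> vert \<Rightarrow> edge set" where
  "ed u v = {(i, j). (u = Inl i \<and> v = Inr j) \<or> (u = Inr j \<and> v = Inl i)}"

fun pm :: "vert list \<Rightarrow> edge set" where
  "pm (a # b # xs) = ed a b \<union> pm xs"
| "pm _ = {}"

definition lefts :: "vert set \<Rightarrow> nat set" where "lefts S = {i. Inl i \<in> S}"
definition rights :: "vert set \<Rightarrow> nat set" where "rights S = {j. Inr j \<in> S}"

lemma pm_props:
  "walk H xs \<Longrightarrow> distinct xs \<Longrightarrow> even (length xs) \<Longrightarrow>
    pm xs \<subseteq> H \<and> matching (pm xs) \<and> fst ` pm xs = lefts (set xs) \<and> snd ` pm xs = rights (set xs)"
proof (induction xs rule: pm.induct)
  case (1 a b xs)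
  have w: "walk H xs" using 1(2) walk_tl[of H "b # xs"] by auto
  have IH: "pm xs \<subseteq> H \<and> matching (pm xs) \<and> fst ` pm xs = lefts (set xs) \<and> snd ` pm xs = rights (set xs)"
    using 1 w by auto
  from 1(2) have "adj H a b" by auto
  then obtain i j where ij: "(i, j) \<in> H" "(a = Inl i \<and> b = Inr j) \<or> (a = Inr j \<and> b = Inl i)"
    unfolding adj_def by blast
  have edab: "ed a b = {(i, j)}" using ij(2) unfolding ed_def by auto
  have ni: "i \<notin> lefts (set xs)" "j \<notin> rights (set xs)"
    using 1(3) ij(2) unfolding lefts_def rights_def by auto
  have "matching (pm (a # b # xs))"
    using matching_insert[of "pm xs" i j] IH ni edab by simp
  moreover have "fst ` pm (a # b # xs) = lefts (set (a # b # xs))"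
    using IH ij(2) edab unfolding lefts_def by auto
  moreover have "snd ` pm (a # b # xs) = rights (set (a # b # xs))"
    using IH ij(2) edab unfolding rights_def by auto
  ultimately show ?case using IH edab ij(1) by auto
next
  case ("2_1")
  then show ?case by (auto simp: matching_def lefts_def rights_def)
next
  case ("2_2" v)
  then show ?case by (auto simp: matching_def lefts_def rights_def)
qed



lemma funpow_inj:
  assumes "inj_on s I" "s ` I \<subseteq> I" "x \<in> I" "y \<in> I" "(s ^^ k) x = (s ^^ k) y"
  shows "x = y"
  using assms(5)
proof (induction k)
  case 0 then show ?case by simp
next
  case (Suc k)
  have "(s ^^ k) x \<in> I" "(s ^^ k) y \<in> I"
    using assms(2,3,4) by (induction k) auto
  then show ?case using Suc assms(1) by (auto dest: inj_onD)
qed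

lemma funpow_in: "s ` I \<subseteq> I \<Longrightarrow> x \<in> I \<Longrightarrow> (s ^^ k) x \<in> I"
  by (induction k) auto

lemma orbit_return:
  assumes "finite I" "inj_on s I" "s ` I \<subseteq> I" "x \<in> I"
  shows "\<exists>p>0. (s ^^ p) x = x"
proof -
  let ?f = "\<lambda>k. (s ^^ k) x"
  have "?f ` {0..card I} \<subseteq> I" using funpow_in[OF assms(3,4)] by blast
  then have "card (?f ` {0..card I}) \<le> card I" using assms(1) card_mono by blast
  then have "\<not> inj_on ?f {0..card I}"
    using pigeonhole[of ?f "{0..card I}"] by simp
  then obtain k l where kl: "k \<in> {0..card I}" "l \<in> {0..card I}" "k \<noteq> l" "?f k = ?f l"
    unfolding inj_on_def by blast
  then obtain a b where ab: "a < b" "?f a = ?f b"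
    by (metis linorder_neqE_nat)
  have "(s ^^ a) ((s ^^ (b - a)) x) = (s ^^ a) x"
    using ab by (metis (no_types, lifting) add_diff_inverse_nat funpow_add less_imp_not_less o_apply)
  then have "(s ^^ (b - a)) x = x"
    using funpow_inj[OF assms(2,3) funpow_in[OF assms(3,4)] assms(4)] by blast
  then show ?thesis using ab(1) by (intro exI[of _ "b - a"]) auto
qed

lemma pm_unique_aux:
  assumes acyc: "acyclic_graph H" and fin: "finite I"
    and pM: "perfect_matching_in H I J M" and pM': "perfect_matching_in H I J M'"
    and a0b: "(a0, b) \<in> M" "(a0, b) \<notin> M'"
  shows False
proof -
  define f where "f x = (THE y. (x, y) \<in> M)" for x
  define g where "g y = (THE x. (x, y) \<in> M')" for y
  have MIJ: "M \<subseteq> I \<times> J" "M' \<subseteq> I \<times> J" "M \<subseteq> H" "M' \<subseteq> H"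
    using pM pM' unfolding perfect_matching_in_def by auto
  have uM: "\<forall>i\<in>I. \<exists>!j. (i, j) \<in> M" "\<forall>j\<in>J. \<exists>!i. (i, j) \<in> M"
    using pM unfolding perfect_matching_in_def by auto
  have uM': "\<forall>i\<in>I. \<exists>!j. (i, j) \<in> M'" "\<forall>j\<in>J. \<exists>!i. (i, j) \<in> M'"
    using pM' unfolding perfect_matching_in_def by auto
  have fM: "x \<in> I \<Longrightarrow> (x, f x) \<in> M" for x
    unfolding f_def using uM(1) theI' by metis
  have gM: "y \<in> J \<Longrightarrow> (g y, y) \<in> M'" for y
    unfolding g_def using uM'(2) theI'[of "\<lambda>x. (x, y) \<in> M'"] by blast
  have fJ: "x \<in> I \<Longrightarrow> f x \<in> J" for x using fM MIJ by blast
  have gI: "y \<in> J \<Longrightarrow> g y \<in> I" for y using gM MIJ by blast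
  have finj: "x \<in> I \<Longrightarrow> y \<in> I \<Longrightarrow> f x = f y \<Longrightarrow> x = y" for x y
    using fM fJ uM(2) by metis
  have ginj: "x \<in> J \<Longrightarrow> y \<in> J \<Longrightarrow> g x = g y \<Longrightarrow> x = y" for x y
    using gM gI uM'(1) by metis
  define s where "s = g \<circ> f"
  have sI: "s ` I \<subseteq> I" unfolding s_def using fJ gI by auto
  have sinj: "inj_on s I" unfolding s_def inj_on_def using finj ginj fJ by simp
  have a0I: "a0 \<in> I" using a0b MIJ by blast
  have fa0: "f a0 = b" using fM[OF a0I] a0b(1) uM(1) a0I by blast
  have sa0: "s a0 \<noteq> a0"
  proof
    assume "s a0 = a0"
    then have "g b = a0" unfolding s_def using fa0 by simp
    then show False using gM[of b] a0b MIJ by blast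
  qed
  define m where "m = (LEAST p. 0 < p \<and> (s ^^ p) a0 = a0)"
  have ex: "\<exists>p. 0 < p \<and> (s ^^ p) a0 = a0" using orbit_return[OF fin sinj sI a0I] by blast
  have m1: "0 < m \<and> (s ^^ m) a0 = a0" unfolding m_def using LeastI_ex[OF ex] .
  have m2: "m \<ge> 2"
  proof (rule ccontr)
    assume "\<not> m \<ge> 2" then have "m = 1" using m1 by simp
    then show False using m1 sa0 by simp
  qed
  define q where "q k = (s ^^ k) a0" for k
  have qI: "q k \<in> I" for k unfolding q_def using funpow_in[OF sI a0I] .
  have qdist: "k < m \<Longrightarrow> l < m \<Longrightarrow> q k = q l \<Longrightarrow> k = l" for k l
  proof (rule ccontr)
    assume kl: "k < m" "l < m" "q k = q l" "k \<noteq> l"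
    have gen: "k' < l' \<Longrightarrow> l' < m \<Longrightarrow> q k' = q l' \<Longrightarrow> False" for k' l'
    proof -
      assume h: "k' < l'" "l' < m" "q k' = q l'"
      have "(s ^^ k') ((s ^^ (l' - k')) a0) = (s ^^ k') a0"
        using h unfolding q_def
        by (metis (no_types, lifting) add_diff_inverse_nat funpow_add less_imp_not_less o_apply)
      then have "(s ^^ (l' - k')) a0 = a0"
        using funpow_inj[OF sinj sI funpow_in[OF sI a0I] a0I] by blast
      moreover have "l' - k' < m" "0 < l' - k'" using h by auto
      ultimately show False using not_less_Least[of "l' - k'" "\<lambda>p. 0 < p \<and> (s ^^ p) a0 = a0"]
        unfolding m_def by blast
    qed
    show False using kl gen by (metis linorder_neqE_nat)
  qed
  have qm: "q m = a0" using m1 unfolding q_def by simp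
  have qSuc: "q (Suc k) = g (f (q k))" for k unfolding q_def s_def by simp
  define h where "h k = (if even k then Inl (q (k div 2)) else Inr (f (q (k div 2))))" for k
  define vs where "vs = map h [0..<2*m]"
  have "is_cycle H vs"
    unfolding is_cycle_def
  proof (intro conjI allI impI)
    show "3 \<le> length vs" unfolding vs_def using m2 by simp
    show "distinct vs" unfolding vs_def distinct_map
    proof
      show "inj_on h (set [0..<2 * m])"
      proof (rule inj_onI)
        fix x y assume xy: "x \<in> set [0..<2 * m]" "y \<in> set [0..<2 * m]" "h x = h y"
        have dm: "x div 2 < m" "y div 2 < m" using xy(1,2) by auto
        have par: "even x = even y" using xy(3) unfolding h_def by (auto split: if_splits)
        have "q (x div 2) = q (y div 2)"
        proof (cases "even x")
          case True then show ?thesis using xy(3) par unfolding h_def by simp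
        next
          case False
          then have "f (q (x div 2)) = f (q (y div 2))" using xy(3) par unfolding h_def by simp
          then show ?thesis using finj qI by blast
        qed
        then have "x div 2 = y div 2" using qdist dm by blast
        then show "x = y" using par by (metis div_mult_mod_eq mod2_eq_if)
      qed
    qed simp
  next
    fix k assume k: "Suc k < length vs"
    then have k2: "Suc k < 2 * m" unfolding vs_def by simp
    have vk: "vs ! k = h k" "vs ! Suc k = h (Suc k)" unfolding vs_def using k2 by auto
    show "adj H (vs ! k) (vs ! Suc k)"
    proof (cases "even k")
      case True
      then have "vs ! k = Inl (q (k div 2))" "vs ! Suc k = Inr (f (q (k div 2)))"
        using vk unfolding h_def by auto
      moreover have "(q (k div 2), f (q (k div 2))) \<in> H" using fM qI MIJ by blast
      ultimately show ?thesis unfolding adj_def by blast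
    next
      case False
      then have "Suc k div 2 = Suc (k div 2)" by presburger
      then have "vs ! k = Inr (f (q (k div 2)))" "vs ! Suc k = Inl (g (f (q (k div 2))))"
        using vk False qSuc unfolding h_def by auto
      moreover have "(g (f (q (k div 2))), f (q (k div 2))) \<in> H" using gM fJ qI MIJ by blast
      ultimately show ?thesis unfolding adj_def by blast
    qed
  next
    have "last vs = h (2 * m - 1)" unfolding vs_def using m2
      by (simp add: last_map)
    moreover have "odd (2 * m - 1)" "(2 * m - 1) div 2 = m - 1" using m2 by presburger+
    ultimately have l: "last vs = Inr (f (q (m - 1)))" unfolding h_def by simp
    have "hd vs = h 0" unfolding vs_def using m2 by (simp add: hd_map)
    then have hv: "hd vs = Inl (g (f (q (m - 1))))" unfolding h_def using qSuc[of "m - 1"] m2 qm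
      by (simp add: q_def)
    have "(g (f (q (m - 1))), f (q (m - 1))) \<in> H" using gM fJ qI MIJ by blast
    then show "adj H (last vs) (hd vs)" unfolding l hv adj_def by blast
  qed
  then show False using acyc unfolding acyclic_graph_def by blast
qed

lemma pm_unique:
  assumes "acyclic_graph H" "finite I"
    "perfect_matching_in H I J M" "perfect_matching_in H I J M'"
  shows "M = M'"
  using pm_unique_aux[OF assms(1,2,3,4)] pm_unique_aux[OF assms(1,2,4,3)] by auto



lemma count_le1:
  assumes pm: "perfect_matching_in G I J M" and G: "G = insert (i0, j0) H"
    and side: "\<And>a b. (a, b) \<in> H \<Longrightarrow> (a \<in> P \<longleftrightarrow> b \<in> Q)"
    and i0: "i0 \<in> P" and j0: "j0 \<notin> Q" and fin: "finite I"
  shows "card (J \<inter> Q) \<le> card (I \<inter> P) \<and> ((i0, j0) \<in> M \<longrightarrow> card (J \<inter> Q) < card (I \<inter> P))"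
proof -
  have MIJ: "M \<subseteq> I \<times> J" "M \<subseteq> G" using pm unfolding perfect_matching_in_def by auto
  have uM: "\<forall>i\<in>I. \<exists>!j. (i, j) \<in> M" "\<forall>j\<in>J. \<exists>!i. (i, j) \<in> M"
    using pm unfolding perfect_matching_in_def by auto
  define h where "h b = (THE a. (a, b) \<in> M)" for b
  have hM: "b \<in> J \<Longrightarrow> (h b, b) \<in> M" for b
    unfolding h_def using uM(2) theI'[of "\<lambda>a. (a, b) \<in> M"] by blast
  have img: "h ` (J \<inter> Q) \<subseteq> I \<inter> P"
  proof
    fix x assume "x \<in> h ` (J \<inter> Q)"
    then obtain b where b: "b \<in> J" "b \<in> Q" "x = h b" by blast
    have "(x, b) \<in> M" using hM b by simp
    moreover have "(x, b) \<noteq> (i0, j0)" using b j0 by auto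
    ultimately have "(x, b) \<in> H" "x \<in> I" using MIJ G by auto
    then show "x \<in> I \<inter> P" using side b by auto
  qed
  have inj: "inj_on h (J \<inter> Q)"
  proof (rule inj_onI)
    fix x y assume xy: "x \<in> J \<inter> Q" "y \<in> J \<inter> Q" "h x = h y"
    have 1: "(h x, x) \<in> M" using hM xy(1) by auto
    have 2: "(h x, y) \<in> M" using hM[of y] xy(2,3) by auto
    have "h x \<in> I" using 1 MIJ by auto
    then show "x = y" using uM(1) 1 2 by blast
  qed
  have finP: "finite (I \<inter> P)" using fin by simp
  have c: "card (J \<inter> Q) = card (h ` (J \<inter> Q))" using inj by (simp add: card_image)
  have le: "card (J \<inter> Q) \<le> card (I \<inter> P)" using c card_mono[OF finP img] by simp
  moreover have "(i0, j0) \<in> M \<longrightarrow> card (J \<inter> Q) < card (I \<inter> P)"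
  proof
    assume e: "(i0, j0) \<in> M"
    have "i0 \<in> I" using e MIJ by auto
    moreover have "i0 \<notin> h ` (J \<inter> Q)"
    proof
      assume "i0 \<in> h ` (J \<inter> Q)"
      then obtain b where b: "b \<in> J" "b \<in> Q" "i0 = h b" by blast
      then have "(i0, b) \<in> M" using hM by simp
      then have "b = j0" using e uM(1) \<open>i0 \<in> I\<close> by blast
      then show False using b j0 by simp
    qed
    ultimately have "h ` (J \<inter> Q) \<subset> I \<inter> P" using img i0 by blast
    then show "card (J \<inter> Q) < card (I \<inter> P)" using c psubset_card_mono[OF finP] by simp
  qed
  ultimately show ?thesis by blast
qed

lemma count_le2:
  assumes pm: "perfect_matching_in G I J M" and G: "G = insert (i0, j0) H"
    and side: "\<And>a b. (a, b) \<in> H \<Longrightarrow> (a \<in> P \<longleftrightarrow> b \<in> Q)"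
    and i0: "i0 \<notin> P" and j0: "j0 \<in> Q" and fin: "finite J"
  shows "card (I \<inter> P) \<le> card (J \<inter> Q) \<and> ((i0, j0) \<in> M \<longrightarrow> card (I \<inter> P) < card (J \<inter> Q))"
proof -
  have MIJ: "M \<subseteq> I \<times> J" "M \<subseteq> G" using pm unfolding perfect_matching_in_def by auto
  have uM: "\<forall>i\<in>I. \<exists>!j. (i, j) \<in> M" "\<forall>j\<in>J. \<exists>!i. (i, j) \<in> M"
    using pm unfolding perfect_matching_in_def by auto
  define h where "h a = (THE b. (a, b) \<in> M)" for a
  have hM: "a \<in> I \<Longrightarrow> (a, h a) \<in> M" for a
    unfolding h_def using uM(1) theI'[of "\<lambda>b. (a, b) \<in> M"] by blast
  have img: "h ` (I \<inter> P) \<subseteq> J \<inter> Q"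
  proof
    fix x assume "x \<in> h ` (I \<inter> P)"
    then obtain a where a: "a \<in> I" "a \<in> P" "x = h a" by blast
    have "(a, x) \<in> M" using hM a by simp
    moreover have "(a, x) \<noteq> (i0, j0)" using a i0 by auto
    ultimately have "(a, x) \<in> H" "x \<in> J" using MIJ G by auto
    then show "x \<in> J \<inter> Q" using side a by auto
  qed
  have inj: "inj_on h (I \<inter> P)"
  proof (rule inj_onI)
    fix x y assume xy: "x \<in> I \<inter> P" "y \<in> I \<inter> P" "h x = h y"
    have 1: "(x, h x) \<in> M" using hM xy(1) by auto
    have 2: "(y, h x) \<in> M" using hM[of y] xy(2,3) by auto
    have "h x \<in> J" using 1 MIJ by auto
    then show "x = y" using uM(2) 1 2 by blast
  qed
  have finQ: "finite (J \<inter> Q)" using fin by simp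
  have c: "card (I \<inter> P) = card (h ` (I \<inter> P))" using inj by (simp add: card_image)
  have le: "card (I \<inter> P) \<le> card (J \<inter> Q)" using c card_mono[OF finQ img] by simp
  moreover have "(i0, j0) \<in> M \<longrightarrow> card (I \<inter> P) < card (J \<inter> Q)"
  proof
    assume e: "(i0, j0) \<in> M"
    have "j0 \<in> J" using e MIJ by auto
    moreover have "j0 \<notin> h ` (I \<inter> P)"
    proof
      assume "j0 \<in> h ` (I \<inter> P)"
      then obtain a where a: "a \<in> I" "a \<in> P" "j0 = h a" by blast
      then have "(a, j0) \<in> M" using hM by simp
      then have "a = i0" using e uM(2) \<open>j0 \<in> J\<close> by blast
      then show False using a i0 by simp
    qed
    ultimately have "h ` (I \<inter> P) \<subset> J \<inter> Q" using img j0 by blast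
    then show "card (I \<inter> P) < card (J \<inter> Q)" using c psubset_card_mono[OF finQ] by simp
  qed
  ultimately show ?thesis by blast
qed

lemma compat_lemma:
  assumes acyc: "acyclic_graph G" and G: "G = insert (i0, j0) H" and G': "G' = insert (i0', j0') H"
    and side: "\<And>a b. (a, b) \<in> H \<Longrightarrow> (a \<in> P \<longleftrightarrow> b \<in> Q)"
    and "i0 \<in> P" "j0 \<notin> Q" "i0' \<notin> P" "j0' \<in> Q"
  shows "compatible n d G G'"
  unfolding compatible_def
proof (intro allI impI)
  fix I J M M'
  assume IJ: "I \<subseteq> {1..n}" "J \<subseteq> {1..d}" and pM: "perfect_matching_in G I J M"
    and pM': "perfect_matching_in G' I J M'"
  have fin: "finite I" "finite J" using IJ finite_subset by auto
  have c1: "card (J \<inter> Q) \<le> card (I \<inter> P) \<and> ((i0, j0) \<in> M \<longrightarrow> card (J \<inter> Q) < card (I \<inter> P))"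
    using count_le1[OF pM G side] assms fin by blast
  have c2: "card (I \<inter> P) \<le> card (J \<inter> Q) \<and> ((i0', j0') \<in> M' \<longrightarrow> card (I \<inter> P) < card (J \<inter> Q))"
    using count_le2[OF pM' G' side] assms fin by blast
  have "(i0, j0) \<notin> M" "(i0', j0') \<notin> M'" using c1 c2 by auto
  then have "perfect_matching_in H I J M" "perfect_matching_in H I J M'"
    using pM pM' G G' unfolding perfect_matching_in_def by auto
  moreover have "acyclic_graph H" using acyc G acyclic_mono by blast
  ultimately show "M = M'" using pm_unique fin by blast
qed



lemma lefts_simps[simp]:
  "lefts (insert (Inl a) S) = insert a (lefts S)" "lefts (insert (Inr b) S) = lefts S"
  "rights (insert (Inl a) S) = rights S" "rights (insert (Inr b) S) = insert b (rights S)"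
  unfolding lefts_def rights_def by auto

lemma lefts_disj: "S \<inter> T = {} \<Longrightarrow> lefts S \<inter> lefts T = {}"
  unfolding lefts_def by auto
lemma rights_disj: "S \<inter> T = {} \<Longrightarrow> rights S \<inter> rights T = {}"
  unfolding rights_def by auto
lemma lefts_nmem: "Inl a \<notin> S \<Longrightarrow> a \<notin> lefts S" unfolding lefts_def by auto
lemma rights_nmem: "Inr a \<notin> S \<Longrightarrow> a \<notin> rights S" unfolding rights_def by auto
lemma lefts_mem: "Inl a \<in> S \<Longrightarrow> a \<in> lefts S" unfolding lefts_def by auto
lemma rights_mem: "Inr a \<in> S \<Longrightarrow> a \<in> rights S" unfolding rights_def by auto

lemma matching_union:
  assumes "matching A" "matching B" "fst ` A \<inter> fst ` B = {}" "snd ` A \<inter> snd ` B = {}"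
    "a \<notin> fst ` A" "a \<notin> fst ` B" "b \<notin> snd ` A" "b \<notin> snd ` B"
  shows "matching (insert (a, b) (A \<union> B))"
  using matching_insert[OF matching_Un[OF assms(1-4)]] assms(5-8) by (simp add: image_Un)

lemma distinct_walk_from:
  assumes "connected_in H u v"
  obtains xs where "walk H xs" "xs \<noteq> []" "hd xs = u" "last xs = v" "distinct xs"
  using conn_walk[OF assms] walk_distinct by metis

lemma walk_split:
  assumes "walk H xs" "xs \<noteq> []" "distinct xs" "odd (length xs)"
  shows "pm (tl xs) \<subseteq> H \<and> matching (pm (tl xs)) \<and> fst ` pm (tl xs) = lefts (set (tl xs))
      \<and> snd ` pm (tl xs) = rights (set (tl xs))"
    "pm (butlast xs) \<subseteq> H \<and> matching (pm (butlast xs)) \<and> fst ` pm (butlast xs) = lefts (set (butlast xs))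
      \<and> snd ` pm (butlast xs) = rights (set (butlast xs))"
    "set xs = insert (hd xs) (set (tl xs))" "hd xs \<notin> set (tl xs)"
    "set xs = insert (last xs) (set (butlast xs))" "last xs \<notin> set (butlast xs)"
proof -
  show "pm (tl xs) \<subseteq> H \<and> matching (pm (tl xs)) \<and> fst ` pm (tl xs) = lefts (set (tl xs))
      \<and> snd ` pm (tl xs) = rights (set (tl xs))"
    using pm_props[OF walk_tl[OF assms(1)]] assms by (simp add: distinct_tl)
  show "pm (butlast xs) \<subseteq> H \<and> matching (pm (butlast xs)) \<and> fst ` pm (butlast xs) = lefts (set (butlast xs))
      \<and> snd ` pm (butlast xs) = rights (set (butlast xs))"
    using pm_props[OF walk_butlast[OF assms(1)]] assms by (simp add: distinct_butlast)
  show "set xs = insert (hd xs) (set (tl xs))" "hd xs \<notin> set (tl xs)"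
    using assms(2,3) by (cases xs; auto)+
  have "xs = butlast xs @ [last xs]" using assms(2) by simp
  then show "set xs = insert (last xs) (set (butlast xs))" "last xs \<notin> set (butlast xs)"
    using assms(3) by (metis Un_insert_right distinct_append list.set(1) list.set(2) set_append
        sup_bot.right_neutral disjoint_iff list.set_intros(1))+
qed

lemma noncompat:
  assumes G: "G = insert (i, j) H" and G': "G' = insert (i', j') H"
    and eH: "(i, j) \<notin> H" and ne: "(i, j) \<noteq> (i', j')"
    and GK: "G \<subseteq> Kedges n d"
    and c1: "connected_in H (Inl i) (Inl i')" and c2: "connected_in H (Inr j) (Inr j')"
    and nc: "\<not> connected_in H (Inl i) (Inr j)"
  shows "\<not> compatible n d G G'"
proof
  assume comp: "compatible n d G G'"
  obtain P where P: "walk H P" "P \<noteq> []" "hd P = Inl i" "last P = Inl i'" "distinct P"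
    using distinct_walk_from[OF c1] by blast
  obtain W where W: "walk H W" "W \<noteq> []" "hd W = Inr j" "last W = Inr j'" "distinct W"
    using distinct_walk_from[OF c2] by blast
  have oP: "odd (length P)" using walk_parity[OF P(1,2)] P(3,4) by simp
  have oW: "odd (length W)" using walk_parity[OF W(1,2)] W(3,4) by simp
  note sP = walk_split[OF P(1,2,5) oP]
  note sW = walk_split[OF W(1,2,5) oW]
  have disj: "set P \<inter> set W = {}"
  proof (rule ccontr)
    assume "set P \<inter> set W \<noteq> {}"
    then obtain x where "x \<in> set P" "x \<in> set W" by blast
    then have "connected_in H (Inl i) x" "connected_in H (Inr j) x"
      using walk_conn P W by metis+
    then show False using nc conn_sym conn_trans by metis
  qed
  have ldisj: "lefts (set P) \<inter> lefts (set W) = {}" "rights (set P) \<inter> rights (set W) = {}"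
    using disj lefts_disj rights_disj by auto
  define A where "A = pm (tl P)"
  define A' where "A' = pm (butlast P)"
  define B where "B = pm (tl W)"
  define B' where "B' = pm (butlast W)"
  define M where "M = insert (i, j) (A \<union> B)"
  define M' where "M' = insert (i', j') (A' \<union> B')"
  have tP: "set P = insert (Inl i) (set (tl P))" "Inl i \<notin> set (tl P)"
    "set P = insert (Inl i') (set (butlast P))" "Inl i' \<notin> set (butlast P)"
    using sP(3-6) P(3,4) by simp_all
  have tW: "set W = insert (Inr j) (set (tl W))" "Inr j \<notin> set (tl W)"
    "set W = insert (Inr j') (set (butlast W))" "Inr j' \<notin> set (butlast W)"
    using sW(3-6) W(3,4) by simp_all
  have fA: "fst ` A = lefts (set (tl P))" "snd ` A = rights (set (tl P))"
    "fst ` A' = lefts (set (butlast P))" "snd ` A' = rights (set (butlast P))"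
    using sP(1,2) unfolding A_def A'_def by simp_all
  have fB: "fst ` B = lefts (set (tl W))" "snd ` B = rights (set (tl W))"
    "fst ` B' = lefts (set (butlast W))" "snd ` B' = rights (set (butlast W))"
    using sW(1,2) unfolding B_def B'_def by simp_all
  have LP: "lefts (set P) = insert i (fst ` A)" "i \<notin> fst ` A"
    "lefts (set P) = insert i' (fst ` A')" "i' \<notin> fst ` A'"
    "rights (set P) = snd ` A" "rights (set P) = snd ` A'"
    subgoal by (subst tP(1)) (simp only: fA lefts_simps)
    subgoal using tP(2) fA(1) lefts_nmem by metis
    subgoal by (subst tP(3)) (simp only: fA lefts_simps)
    subgoal using tP(4) fA(3) lefts_nmem by metis
    subgoal by (subst tP(1)) (simp only: fA lefts_simps)
    subgoal by (subst tP(3)) (simp only: fA lefts_simps)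
    done
  have LW: "rights (set W) = insert j (snd ` B)" "j \<notin> snd ` B"
    "rights (set W) = insert j' (snd ` B')" "j' \<notin> snd ` B'"
    "lefts (set W) = fst ` B" "lefts (set W) = fst ` B'"
    subgoal by (subst tW(1)) (simp only: fB lefts_simps)
    subgoal using tW(2) fB(2) rights_nmem by metis
    subgoal by (subst tW(3)) (simp only: fB lefts_simps)
    subgoal using tW(4) fB(4) rights_nmem by metis
    subgoal by (subst tW(1)) (simp only: fB lefts_simps)
    subgoal by (subst tW(3)) (simp only: fB lefts_simps)
    done
  have iP: "i \<in> lefts (set P)" "i' \<in> lefts (set P)" "j \<in> rights (set W)" "j' \<in> rights (set W)"
    using LP LW by auto
  have mM: "matching M" unfolding M_def
  proof (rule matching_union)
    show "matching A" "matching B" using sP(1) sW(1) unfolding A_def B_def by blast+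
    show "fst ` A \<inter> fst ` B = {}" "snd ` A \<inter> snd ` B = {}" using LP LW ldisj by auto
    show "i \<notin> fst ` A" "j \<notin> snd ` B" using LP LW by auto
    show "i \<notin> fst ` B" using LW(5) ldisj(1) iP(1) by blast
    show "j \<notin> snd ` A" using LP(5) ldisj(2) iP(3) by blast
  qed
  have mM': "matching M'" unfolding M'_def
  proof (rule matching_union)
    show "matching A'" "matching B'" using sP(2) sW(2) unfolding A'_def B'_def by blast+
    have "fst ` A' \<subseteq> lefts (set P)" "snd ` B' \<subseteq> rights (set W)" using LP(3) LW(3) by auto
    then show "fst ` A' \<inter> fst ` B' = {}" "snd ` A' \<inter> snd ` B' = {}" using LP(6) LW(6) ldisj by blast+
    show "i' \<notin> fst ` A'" "j' \<notin> snd ` B'" using LP LW by auto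
    show "i' \<notin> fst ` B'" using LW(6) ldisj(1) iP(2) by blast
    show "j' \<notin> snd ` A'" using LP(6) ldisj(2) iP(4) by blast
  qed
  have MG: "M \<subseteq> G" "M' \<subseteq> G'" using sP sW G G' unfolding M_def M'_def A_def B_def A'_def B'_def
    by auto
  have fM: "fst ` M' = fst ` M" "snd ` M' = snd ` M"
    unfolding M_def M'_def using LP LW by auto
  have p1: "perfect_matching_in G (fst ` M) (snd ` M) M" using matching_pm[OF mM MG(1)] .
  have p2: "perfect_matching_in G' (fst ` M) (snd ` M) M'" using matching_pm[OF mM' MG(2)] fM by simp
  have s1: "fst ` M \<subseteq> {1..n}" "snd ` M \<subseteq> {1..d}" using MG GK unfolding Kedges_def by auto
  have c: "\<And>I J M M'. I \<subseteq> {1..n} \<Longrightarrow> J \<subseteq> {1..d} \<Longrightarrow> perfect_matching_in G I J M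
     \<Longrightarrow> perfect_matching_in G' I J M' \<Longrightarrow> M = M'" using comp unfolding compatible_def by blast
  have "M = M'" by (rule c[OF s1 p1 p2])
  moreover have "(i, j) \<in> M" unfolding M_def by simp
  moreover have "(i, j) \<notin> M'" using ne eH sP sW unfolding M'_def A'_def B'_def by auto
  ultimately show False by simp
qed



theorem mainTheorem1:
  fixes n d :: nat and G G' H :: "edge set" and e e' :: edge
    and I1 J1 I2 J2 :: "nat set"
  assumes "n \<ge> 1" and "d \<ge> 1"
    and "spanning_tree n d G" and "spanning_tree n d G'" and "G \<noteq> G'"
    and "e \<in> G" and "e' \<in> G'"
    and "G - {e} = H" and "G' - {e'} = H"
    and "components n d H = {vset I1 J1, vset I2 J2}"
    and "vset I1 J1 \<noteq> vset I2 J2"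
  shows "(compatible n d G G' \<longleftrightarrow>
            ((fst e \<in> I1 \<and> snd e \<in> J2 \<and> fst e' \<in> I2 \<and> snd e' \<in> J1)
             \<or> (fst e \<in> I2 \<and> snd e \<in> J1 \<and> fst e' \<in> I1 \<and> snd e' \<in> J2)))
       \<and> (compatible n d G G' \<longrightarrow> fst e \<noteq> fst e' \<and> snd e \<noteq> snd e')"
proof -
  note sp = assms(3,4)
  define comp where "comp u = {v \<in> Kverts n d. connected_in H u v}" for u
  have cs: "components n d H = comp ` Kverts n d" unfolding components_def comp_def by simp
  obtain u1 where u1: "u1 \<in> Kverts n d" "vset I1 J1 = comp u1" using assms(10) cs by (metis imageE insertI1)
  obtain u2 where u2: "u2 \<in> Kverts n d" "vset I2 J2 = comp u2" using assms(10) cs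
    by (metis imageE insertI1 insert_commute)
  have memb: "v \<in> comp u \<longleftrightarrow> v \<in> Kverts n d \<and> connected_in H u v" for u v unfolding comp_def by simp
  have vs: "Inl a \<in> vset I J \<longleftrightarrow> a \<in> I" "Inr b \<in> vset I J \<longleftrightarrow> b \<in> J" for a b I J
    unfolding vset_def by auto
  have KV: "Inl a \<in> Kverts n d \<longleftrightarrow> a \<in> {1..n}" "Inr b \<in> Kverts n d \<longleftrightarrow> b \<in> {1..d}" for a b
    unfolding Kverts_def by auto
  have GK: "G \<subseteq> Kedges n d" "G' \<subseteq> Kedges n d" using sp unfolding spanning_tree_def by auto
  have HG: "H \<subseteq> G" using assms(8) by auto
  have GH: "G = insert e H" "G' = insert e' H" using assms(6,7,8,9) by auto
  have eH: "e \<notin> H" "e' \<notin> H" using assms(8,9) by auto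
  have ne: "e \<noteq> e'" using GH assms(5) by auto
  have comp_eq: "connected_in H u v \<Longrightarrow> comp u = comp v" for u v
    unfolding comp_def using conn_sym conn_trans by blast
  have nc12: "\<not> connected_in H u1 u2" using comp_eq u1 u2 assms(11) by metis
  have cover: "v \<in> Kverts n d \<Longrightarrow> v \<in> comp u1 \<or> v \<in> comp u2" for v
  proof -
    assume v: "v \<in> Kverts n d"
    then have "comp v \<in> {vset I1 J1, vset I2 J2}" using assms(10) cs by blast
    moreover have "v \<in> comp v" using v conn_refl memb by blast
    ultimately show ?thesis using u1 u2 by auto
  qed
  have disj: "v \<in> comp u1 \<Longrightarrow> v \<in> comp u2 \<Longrightarrow> False" for v
    using memb nc12 conn_sym conn_trans by metis
  have inC: "x \<in> comp u \<Longrightarrow> y \<in> comp u \<Longrightarrow> connected_in H x y" for x y u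
    using memb conn_sym conn_trans by metis
  have I12: "I1 \<inter> I2 = {}" "J1 \<inter> J2 = {}" using disj u1 u2 vs by blast+
  have side: "(a, b) \<in> H \<Longrightarrow> (a \<in> I1 \<longleftrightarrow> b \<in> J1) \<and> (a \<in> I2 \<longleftrightarrow> b \<in> J2)" for a b
  proof -
    assume ab: "(a, b) \<in> H"
    then have k: "Inl a \<in> Kverts n d" "Inr b \<in> Kverts n d"
      using HG GK KV unfolding Kedges_def by auto
    have c: "connected_in H (Inl a) (Inr b)" using conn_edge[OF ab] .
    have "Inl a \<in> comp u \<longleftrightarrow> Inr b \<in> comp u" for u
      using memb k c conn_sym conn_trans by metis
    then show ?thesis using u1 u2 vs by metis
  qed
  have cross: "(a \<in> I1 \<and> b \<in> J2) \<or> (a \<in> I2 \<and> b \<in> J1)"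
    if K: "spanning_tree n d K" "K = insert (a, b) H" for K a b
  proof -
    have k: "Inl a \<in> Kverts n d" "Inr b \<in> Kverts n d"
      using K KV unfolding spanning_tree_def Kedges_def by auto
    have same: False if s: "Inl a \<in> comp u" "Inr b \<in> comp u" for u
    proof -
      have "connected_in H (Inl a) (Inr b)" using inC s by blast
      moreover have "connected_in K u1 u2" using K(1) u1 u2 unfolding spanning_tree_def by blast
      ultimately have "connected_in H u1 u2" using conn_mono_insert K(2) by metis
      then show False using nc12 by simp
    qed
    show ?thesis using cover[OF k(1)] cover[OF k(2)] same u1 u2 vs by metis
  qed
  obtain i j where e: "e = (i, j)" by fastforce
  obtain i' j' where e': "e' = (i', j')" by fastforce
  have ce: "(i \<in> I1 \<and> j \<in> J2) \<or> (i \<in> I2 \<and> j \<in> J1)" using cross[OF sp(1)] GH e by blast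
  have ce': "(i' \<in> I1 \<and> j' \<in> J2) \<or> (i' \<in> I2 \<and> j' \<in> J1)" using cross[OF sp(2)] GH e' by blast
  have ijK: "Inl i \<in> Kverts n d" "Inr j \<in> Kverts n d" "Inl i' \<in> Kverts n d" "Inr j' \<in> Kverts n d"
    using GK assms(6,7) e e' KV unfolding Kedges_def by auto
  have acyc: "acyclic_graph G" using sp unfolding spanning_tree_def by blast
  have sideA: "(a, b) \<in> H \<Longrightarrow> (a \<in> I1 \<longleftrightarrow> b \<in> J1)" for a b using side by blast
  have sideB: "(a, b) \<in> H \<Longrightarrow> (a \<in> I2 \<longleftrightarrow> b \<in> J2)" for a b using side by blast
  from ce ce' show ?thesis
  proof (elim disjE conjE)
    assume h: "i \<in> I1" "j \<in> J2" "i' \<in> I1" "j' \<in> J2"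
    have C: "Inl i \<in> comp u1" "Inl i' \<in> comp u1" "Inr j \<in> comp u2" "Inr j' \<in> comp u2"
      using h u1 u2 vs by auto
    have "\<not> connected_in H (Inl i) (Inr j)"
    proof
      assume "connected_in H (Inl i) (Inr j)"
      then have "Inr j \<in> comp u1" using C(1) memb ijK conn_trans by metis
      then show False using C(3) disj by blast
    qed
    then have "\<not> compatible n d G G'"
      using noncompat[OF GH(1)[unfolded e] GH(2)[unfolded e'] eH(1)[unfolded e] ne[unfolded e e'] GK(1)]
        inC C by blast
    then show ?thesis using h I12 e e' by auto
  next
    assume h: "i \<in> I2" "j \<in> J1" "i' \<in> I2" "j' \<in> J1"
    have C: "Inl i \<in> comp u2" "Inl i' \<in> comp u2" "Inr j \<in> comp u1" "Inr j' \<in> comp u1"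
      using h u1 u2 vs by auto
    have "\<not> connected_in H (Inl i) (Inr j)"
    proof
      assume "connected_in H (Inl i) (Inr j)"
      then have "Inr j \<in> comp u2" using C(1) memb ijK conn_trans by metis
      then show False using C(3) disj by blast
    qed
    then have "\<not> compatible n d G G'"
      using noncompat[OF GH(1)[unfolded e] GH(2)[unfolded e'] eH(1)[unfolded e] ne[unfolded e e'] GK(1)]
        inC C by blast
    then show ?thesis using h I12 e e' by auto
  next
    assume h: "i \<in> I1" "j \<in> J2" "i' \<in> I2" "j' \<in> J1"
    have "i \<in> I1" "j \<notin> J1" "i' \<notin> I1" "j' \<in> J1" using h I12 by auto
    then have "compatible n d G G'"
      using compat_lemma[OF acyc GH(1)[unfolded e] GH(2)[unfolded e'] sideA] by blast
    then show ?thesis using h I12 e e' by auto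
  next
    assume h: "i \<in> I2" "j \<in> J1" "i' \<in> I1" "j' \<in> J2"
    have "i \<in> I2" "j \<notin> J2" "i' \<notin> I2" "j' \<in> J2" using h I12 by auto
    then have "compatible n d G G'"
      using compat_lemma[OF acyc GH(1)[unfolded e] GH(2)[unfolded e'] sideB] by blast
    then show ?thesis using h I12 e e' by auto
  qed
qed

end
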